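(* Let $(\|\cdot\|,\mathcal{P})$ be a sparsity structure on $\mathcal{E}$, let $B:\mathcal{X}\to\mathcal{E}$ be a linear bijection, and let $A:\mathcal{X}\to\mathbb{R}^n$ be linear. Assume $\bar P=I-P$ for every $P\in\mathcal{P}$. Then $\mathcal{C}_P=\mathcal{D}_P$ for every $P\in\mathcal{P}$, and for every $k\ge0$, $\mu_k(A)=\sigma_k(A)$, where $$\mathcal{C}_P=\bigcup_{x\in\mathcal{X}:\ PBx=Bx}\mathcal{T}(x),\qquad \mathcal{D}_P=\{z\in\mathcal{X}:\ \|\bar P Bz\|\le\|PBz\|\},$$ $$\mu_k(A)=\inf_{\substack{P\in\mathcal{P}_k,\ x\in\mathcal{X}\\ PBx=Bx}}\ \inf_{z\in\mathcal{T}(x),\,z\ne 0}\frac{\|Az\|_2}{\|z\|_2},\qquad \sigma_k(A)=\inf_{\substack{P\in\mathcal{P}_k,\ z\in\mathcal{X},\ z\neq 0\\ \|\bar PBz\|\le\|PBz\|}}\frac{\|Az\|_2}{\|z\|_2}.$$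
   Context: Sparsity structure: let $\mathcal{X},\mathcal{E}$ be finite-dimensional Euclidean spaces and $B:\mathcal{X}\to\mathcal{E}$ a linear map. A sparsity structure on $\mathcal{E}$ is a norm $\|\cdot\|$ on $\mathcal{E}$, with dual norm $\|\cdot\|_*$, together with a family $\mathcal{P}$ of linear maps $\mathcal{E}\to\mathcal{E}$ such that: (i) every $P\in\mathcal{P}$ is a projector, $P^2=P$; (ii) every $P\in\mathcal{P}$ is assigned a weight $\nu(P)\ge 0$ and a linear map $\bar P:\mathcal{E}\to\mathcal{E}$ with $P\bar P=0$; (iii) for every $P\in\mathcal{P}$ and all $f,g\in\mathcal{E}$, $\|P^*f+\bar P^*g\|_*\le\max(\|f\|_*,\|g\|_* )$, where $P^*$ and $\bar P^*$ denote adjoints. For $k\ge 0$, $\mathcal{P}_k=\{P\in\mathcal{P}:\nu(P)\le k\}$. Tangent cone: for $x\in\mathcal{X}$, $\mathcal{T}(x)=\{\lambda z:\ \lambda\ge 0,\ z\in\mathcal{X},\ \|Bx+Bz\|\le\|Bx\|\}$. $\|\cdot\|_2$ is the Euclidean norm. *)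

theory Defs
  imports "HOL-Analysis.Analysis"
begin

definition is_norm :: "('e::euclidean_space \<Rightarrow> real) \<Rightarrow> bool" where
  "is_norm nrm \<longleftrightarrow>
     (\<forall>v. 0 \<le> nrm v) \<and> (\<forall>v. nrm v = 0 \<longleftrightarrow> v = 0) \<and>
     (\<forall>c v. nrm (c *\<^sub>R v) = \<bar>c\<bar> * nrm v) \<and>
     (\<forall>v w. nrm (v + w) \<le> nrm v + nrm w)"

definition dual_norm :: "('e::euclidean_space \<Rightarrow> real) \<Rightarrow> 'e \<Rightarrow> real" where
  "dual_norm nrm f = Sup {f \<bullet> v | v. nrm v \<le> 1}"

definition sparsity_structure ::
  "('e::euclidean_space \<Rightarrow> real) \<Rightarrow> ('e \<Rightarrow> 'e) set \<Rightarrow> (('e \<Rightarrow> 'e) \<Rightarrow> real)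
   \<Rightarrow> (('e \<Rightarrow> 'e) \<Rightarrow> ('e \<Rightarrow> 'e)) \<Rightarrow> bool" where
  "sparsity_structure nrm Ps nu Pbar \<longleftrightarrow>
     is_norm nrm \<and>
     (\<forall>P\<in>Ps. linear P \<and> (\<forall>v. P (P v) = P v) \<and>
        0 \<le> nu P \<and> linear (Pbar P) \<and> (\<forall>v. P (Pbar P v) = 0) \<and>
        (\<forall>f g. dual_norm nrm (adjoint P f + adjoint (Pbar P) g)
                 \<le> max (dual_norm nrm f) (dual_norm nrm g)))"

definition tangent_cone ::
  "('e::euclidean_space \<Rightarrow> real) \<Rightarrow> ('x::euclidean_space \<Rightarrow> 'e) \<Rightarrow> 'x \<Rightarrow> 'x set" where
  "tangent_cone nrm B x = {l *\<^sub>R z | l z. 0 \<le> l \<and> nrm (B x + B z) \<le> nrm (B x)}"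

definition C_set ::
  "('e::euclidean_space \<Rightarrow> real) \<Rightarrow> ('x::euclidean_space \<Rightarrow> 'e) \<Rightarrow> ('e \<Rightarrow> 'e) \<Rightarrow> 'x set" where
  "C_set nrm B P = (\<Union>x\<in>{x. P (B x) = B x}. tangent_cone nrm B x)"

definition D_set ::
  "('e::euclidean_space \<Rightarrow> real) \<Rightarrow> ('x::euclidean_space \<Rightarrow> 'e) \<Rightarrow> ('e \<Rightarrow> 'e) \<Rightarrow> ('e \<Rightarrow> 'e) \<Rightarrow> 'x set" where
  "D_set nrm B P Pb = {z. nrm (Pb (B z)) \<le> nrm (P (B z))}"

text \<open>Infima are taken in the extended reals (inf of the empty set is +\<infinity>).\<close>
definition mu_k ::
  "('e::euclidean_space \<Rightarrow> real) \<Rightarrow> ('e \<Rightarrow> 'e) set \<Rightarrow> (('e \<Rightarrow> 'e) \<Rightarrow> real)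
   \<Rightarrow> ('x::euclidean_space \<Rightarrow> 'e) \<Rightarrow> ('x \<Rightarrow> real ^ 'n) \<Rightarrow> real \<Rightarrow> ereal" where
  "mu_k nrm Ps nu B A k =
     (INF P\<in>{P\<in>Ps. nu P \<le> k}. INF x\<in>{x. P (B x) = B x}.
        INF z\<in>tangent_cone nrm B x - {0}. ereal (norm (A z) / norm z))"

definition sigma_k ::
  "('e::euclidean_space \<Rightarrow> real) \<Rightarrow> ('e \<Rightarrow> 'e) set \<Rightarrow> (('e \<Rightarrow> 'e) \<Rightarrow> real)
   \<Rightarrow> (('e \<Rightarrow> 'e) \<Rightarrow> ('e \<Rightarrow> 'e)) \<Rightarrow> ('x::euclidean_space \<Rightarrow> 'e) \<Rightarrow> ('x \<Rightarrow> real ^ 'n)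
   \<Rightarrow> real \<Rightarrow> ereal" where
  "sigma_k nrm Ps nu Pbar B A k =
     (INF P\<in>{P\<in>Ps. nu P \<le> k}.
        INF z\<in>{z. z \<noteq> 0 \<and> nrm (Pbar P (B z)) \<le> nrm (P (B z))}. ereal (norm (A z) / norm z))"

end

theory Submission imports Defs begin


lemma norm_zero[simp]: "is_norm nrm \<Longrightarrow> nrm 0 = 0"
  unfolding is_norm_def by blast

lemma norm_scale[simp]: "is_norm nrm \<Longrightarrow> nrm (c *\<^sub>R v) = \<bar>c\<bar> * nrm v"
  unfolding is_norm_def by blast

lemma norm_neg[simp]: "is_norm nrm \<Longrightarrow> nrm (- v) = nrm v"
  using norm_scale[of nrm "-1" v] by simp

lemma norm_pos: assumes "is_norm nrm" "v \<noteq> 0" shows "nrm v > 0"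
proof -
  have "0 \<le> nrm v" "nrm v \<noteq> 0" using assms unfolding is_norm_def by auto
  then show ?thesis by linarith
qed

lemma norm_tri: "is_norm nrm \<Longrightarrow> nrm (v + w) \<le> nrm v + nrm w"
  unfolding is_norm_def by blast

lemma norm_convex: "is_norm nrm \<Longrightarrow> convex_on UNIV nrm"
proof (rule convex_onI)
  fix t :: real and x y assume n: "is_norm nrm" and t: "0 < t" "t < 1"
  have "nrm ((1 - t) *\<^sub>R x + t *\<^sub>R y) \<le> nrm ((1 - t) *\<^sub>R x) + nrm (t *\<^sub>R y)"
    using n unfolding is_norm_def by blast
  also have "\<dots> = (1 - t) * nrm x + t * nrm y" using n t unfolding is_norm_def by simp
  finally show "nrm ((1 - t) *\<^sub>R x + t *\<^sub>R y) \<le> (1 - t) * nrm x + t * nrm y" .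
qed simp

lemma norm_lower:
  fixes nrm :: "'e::euclidean_space \<Rightarrow> real"
  assumes n: "is_norm nrm"
  shows "\<exists>m>0. \<forall>v. m * norm v \<le> nrm v"
proof -
  have c: "continuous_on UNIV nrm" using convex_on_continuous[OF open_UNIV norm_convex[OF n]] .
  obtain x where x: "x \<in> sphere 0 1" "\<forall>y\<in>sphere (0::'e) 1. nrm x \<le> nrm y"
  proof -
    have c': "continuous_on (sphere (0::'e) 1) nrm" using continuous_on_subset[OF c subset_UNIV] .
    have ne: "sphere (0::'e) 1 \<noteq> {}" by simp
    show ?thesis using continuous_attains_inf[OF compact_sphere ne c'] that by blast
  qed
  have "x \<noteq> 0" using x by auto
  then have pos: "nrm x > 0" using n norm_pos by blast
  show ?thesis
  proof (intro exI[of _ "nrm x"] conjI allI pos)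
    fix v :: 'e
    show "nrm x * norm v \<le> nrm v"
    proof (cases "v = 0")
      case True then show ?thesis using n by simp
    next
      case False
      have "nrm x \<le> nrm ((1 / norm v) *\<^sub>R v)" using x False by simp
      also have "\<dots> = nrm v / norm v" using n by simp
      finally show ?thesis using False by (simp add: field_simps)
    qed
  qed
qed

lemma dual_bound:
  fixes nrm :: "'e::euclidean_space \<Rightarrow> real"
  assumes n: "is_norm nrm"
  shows "h \<bullet> y \<le> dual_norm nrm h * nrm y"
proof -
  obtain m where m: "m > 0" "\<forall>v. m * norm v \<le> nrm v" using norm_lower[OF n] by blast
  have bdd: "bdd_above {h \<bullet> v | v. nrm v \<le> 1}"
  proof (rule bdd_aboveI)
    fix t assume "t \<in> {h \<bullet> v | v. nrm v \<le> 1}"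
    then obtain v where v: "t = h \<bullet> v" "nrm v \<le> 1" by blast
    have "m * norm v \<le> 1" using m v by (metis order_trans)
    then have "norm v \<le> 1 / m" using m by (simp add: pos_le_divide_eq mult.commute)
    have "t \<le> norm h * norm v" using v norm_cauchy_schwarz by simp
    also have "\<dots> \<le> norm h * (1 / m)" using \<open>norm v \<le> 1 / m\<close> by (rule mult_left_mono) simp
    finally show "t \<le> norm h * (1 / m)" .
  qed
  show ?thesis
  proof (cases "y = 0")
    case True then show ?thesis using n by simp
  next
    case False
    then have p: "nrm y > 0" using n norm_pos by blast
    have "nrm ((1 / nrm y) *\<^sub>R y) = 1" using n p by simp
    then have "\<exists>v. h \<bullet> ((1 / nrm y) *\<^sub>R y) = h \<bullet> v \<and> nrm v \<le> 1"
      by (intro exI[of _ "(1 / nrm y) *\<^sub>R y"]) simp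
    then have mem: "h \<bullet> ((1 / nrm y) *\<^sub>R y) \<in> {h \<bullet> v | v. nrm v \<le> 1}" by simp
    have "h \<bullet> ((1 / nrm y) *\<^sub>R y) \<le> dual_norm nrm h"
      unfolding dual_norm_def by (rule cSup_upper[OF mem bdd])
    then show ?thesis using p by (simp add: field_simps)
  qed
qed

lemma norming:
  fixes nrm :: "'e::euclidean_space \<Rightarrow> real"
  assumes n: "is_norm nrm"
  shows "\<exists>f. dual_norm nrm f \<le> 1 \<and> f \<bullet> y = nrm y"
proof -
  have "\<exists>f. (\<forall>v. f \<bullet> v \<le> nrm v) \<and> f \<bullet> y = nrm y"
  proof (cases "y = 0")
    case True then show ?thesis using n unfolding is_norm_def by (intro exI[of _ 0]) auto
  next
    case False
    then have p: "nrm y > 0" using n norm_pos by blast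
    let ?S = "{v. nrm v < nrm y}"
    have cS: "convex ?S"
    proof (rule convexI)
      fix x z u v assume xz: "x \<in> ?S" "z \<in> ?S" and uv: "0 \<le> u" "0 \<le> (v::real)" "u + v = 1"
      have "nrm (u *\<^sub>R x + v *\<^sub>R z) \<le> nrm (u *\<^sub>R x) + nrm (v *\<^sub>R z)"
        using n unfolding is_norm_def by blast
      also have "\<dots> = u * nrm x + v * nrm z" using n uv unfolding is_norm_def by simp
      also have "\<dots> < nrm y"
      proof (cases "u = 0")
        case True then show ?thesis using xz uv by simp
      next
        case False
        then have "u * nrm x < u * nrm y" using uv xz by (simp add: mult_strict_left_mono)
        moreover have "v * nrm z \<le> v * nrm y" using uv xz by (simp add: mult_left_mono)
        moreover have "u * nrm y + v * nrm y = nrm y" using uv by (metis distrib_right mult_1)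
        ultimately show ?thesis by linarith
      qed
      finally show "u *\<^sub>R x + v *\<^sub>R z \<in> ?S" by simp
    qed
    have "0 \<in> ?S" using p n by simp
    then obtain a b where ab: "a \<noteq> 0" "\<forall>x\<in>?S. a \<bullet> x \<le> b" "\<forall>x\<in>{y}. a \<bullet> x \<ge> b"
      using separating_hyperplane_sets[OF cS convex_singleton, of y] by auto
    have na: "nrm a > 0" using ab(1) n norm_pos by blast
    define v0 where "v0 = (nrm y / (2 * nrm a)) *\<^sub>R a"
    have "nrm v0 = nrm y / 2" using n na p unfolding v0_def by simp
    then have "v0 \<in> ?S" using p by simp
    moreover have "a \<bullet> v0 > 0" using na p ab(1) unfolding v0_def by simp
    ultimately have bpos: "b > 0" using ab(2) by fastforce
    have key: "nrm y * (a \<bullet> v) \<le> b * nrm v" for v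
    proof (cases "v = 0")
      case True then show ?thesis using n by simp
    next
      case False
      then have nv: "nrm v > 0" using n norm_pos by blast
      show ?thesis
      proof (rule field_le_mult_one_interval)
        fix s :: real assume s: "0 < s" "s < 1"
        define w where "w = (s * nrm y / nrm v) *\<^sub>R v"
        have "nrm w = s * nrm y" using n nv s p unfolding w_def by simp
        then have "w \<in> ?S" using s p by simp
        then have "a \<bullet> w \<le> b" using ab(2) by blast
        then have "(s * nrm y / nrm v) * (a \<bullet> v) \<le> b" unfolding w_def by simp
        then show "s * (nrm y * (a \<bullet> v)) \<le> b * nrm v" using nv by (simp add: pos_divide_le_eq algebra_simps)
      qed
    qed
    define f where "f = (nrm y / b) *\<^sub>R a"
    have fle: "f \<bullet> v \<le> nrm v" for v
      using key[of v] bpos unfolding f_def by (simp add: field_simps)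
    have "f \<bullet> y \<ge> nrm y" using ab(3) bpos p unfolding f_def by (simp add: field_simps mult_left_mono)
    then have "f \<bullet> y = nrm y" using fle[of y] by simp
    then show ?thesis using fle by blast
  qed
  then obtain f where f: "\<forall>v. f \<bullet> v \<le> nrm v" "f \<bullet> y = nrm y" by blast
  have "dual_norm nrm f \<le> 1" unfolding dual_norm_def
  proof (rule cSup_least)
    have "nrm 0 \<le> 1" using n by simp
    then have "f \<bullet> 0 \<in> {f \<bullet> v |v. nrm v \<le> 1}" by blast
    then show "{f \<bullet> v |v. nrm v \<le> 1} \<noteq> {}" by blast
    fix x assume "x \<in> {f \<bullet> v |v. nrm v \<le> 1}"
    then obtain v where "x = f \<bullet> v" "nrm v \<le> 1" by blast
    then show "x \<le> 1" using f(1) by (metis order_trans)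
  qed
  then show ?thesis using f by blast
qed

lemma decomp:
  fixes nrm :: "'e::euclidean_space \<Rightarrow> real"
  assumes n: "is_norm nrm"
    and dn: "\<forall>f g. dual_norm nrm (adjoint P f + adjoint Q g) \<le> max (dual_norm nrm f) (dual_norm nrm g)"
    and lP: "linear P" and lQ: "linear Q"
    and Pu: "P u = u" and Qu: "Q u = 0" and Pw: "P w = 0" and Qw: "Q w = w"
  shows "nrm u + nrm w \<le> nrm (u + w)"
proof -
  obtain f where f: "dual_norm nrm f \<le> 1" "f \<bullet> u = nrm u" using norming[OF n] by blast
  obtain g where g: "dual_norm nrm g \<le> 1" "g \<bullet> w = nrm w" using norming[OF n] by blast
  define h where "h = adjoint P f + adjoint Q g"
  have dh: "dual_norm nrm h \<le> 1" using dn f g unfolding h_def by (metis max.bounded_iff order_trans)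
  have "h \<bullet> (u + w) = (u + w) \<bullet> adjoint P f + (u + w) \<bullet> adjoint Q g"
    unfolding h_def by (simp add: inner_commute inner_add_left inner_add_right)
  also have "\<dots> = P (u + w) \<bullet> f + Q (u + w) \<bullet> g"
    by (simp add: adjoint_works[OF lP] adjoint_works[OF lQ])
  also have "\<dots> = nrm u + nrm w"
    using f g Pu Qu Pw Qw by (simp add: linear_add[OF lP] linear_add[OF lQ] inner_commute)
  finally have e: "h \<bullet> (u + w) = nrm u + nrm w" .
  have "h \<bullet> (u + w) \<le> dual_norm nrm h * nrm (u + w)" by (rule dual_bound[OF n])
  also have "\<dots> \<le> 1 * nrm (u + w)"
    using dh n unfolding is_norm_def by (intro mult_right_mono) auto
  finally show ?thesis using e by simp
qed

lemma INF_UNION': "(INF x\<in>(\<Union>y\<in>A. g y). f x) = (INF y\<in>A. INF x\<in>g y. f x :: _ :: complete_lattice)"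
  by (rule order_antisym) (blast intro: INF_greatest INF_lower2)+

theorem lemma7:
  fixes nrm :: "'e::euclidean_space \<Rightarrow> real"
    and Ps :: "('e \<Rightarrow> 'e) set"
    and nu :: "('e \<Rightarrow> 'e) \<Rightarrow> real"
    and Pbar :: "('e \<Rightarrow> 'e) \<Rightarrow> ('e \<Rightarrow> 'e)"
    and B :: "'x::euclidean_space \<Rightarrow> 'e"
    and A :: "'x \<Rightarrow> real ^ 'n"
  assumes "sparsity_structure nrm Ps nu Pbar"
    and "linear B" and "bij B"
    and "linear A"
    and "\<forall>P\<in>Ps. Pbar P = (\<lambda>v. v - P v)"
  shows "(\<forall>P\<in>Ps. C_set nrm B P = D_set nrm B P (Pbar P)) \<and>
         (\<forall>k::real. 0 \<le> k \<longrightarrow> mu_k nrm Ps nu B A k = sigma_k nrm Ps nu Pbar B A k)"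
proof -
  have n: "is_norm nrm" using assms(1) unfolding sparsity_structure_def by blast
  have lB: "linear B" by fact
  have CD: "C_set nrm B P = D_set nrm B P (Pbar P)" if PP: "P \<in> Ps" for P
  proof -
    have lP: "linear P" and idem: "\<And>v. P (P v) = P v"
      and dn: "\<forall>f g. dual_norm nrm (adjoint P f + adjoint (Pbar P) g) \<le> max (dual_norm nrm f) (dual_norm nrm g)"
      and lQ: "linear (Pbar P)"
      using assms(1) PP unfolding sparsity_structure_def by blast+
    have Q: "Pbar P = (\<lambda>v. v - P v)" using assms(5) PP by blast
    show ?thesis
    proof (intro equalityI subsetI)
      fix z assume "z \<in> C_set nrm B P"
      then obtain x where x: "P (B x) = B x" "z \<in> tangent_cone nrm B x"
        unfolding C_set_def by blast
      then obtain l w0 where lw: "z = l *\<^sub>R w0" "0 \<le> l" "nrm (B x + B w0) \<le> nrm (B x)"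
        unfolding tangent_cone_def by blast
      define u where "u = B x"
      define v where "v = B w0"
      have Pu: "P u = u" using x unfolding u_def by simp
      have d: "nrm (u + P v) + nrm (v - P v) \<le> nrm ((u + P v) + (v - P v))"
      proof (rule decomp[OF n dn lP lQ])
        show "P (u + P v) = u + P v" using Pu idem by (simp add: linear_add[OF lP])
        then show "Pbar P (u + P v) = 0" using Q by simp
        show "P (v - P v) = 0" using idem by (simp add: linear_diff[OF lP])
        then show "Pbar P (v - P v) = v - P v" using Q by simp
      qed
      have "nrm (u + v) \<le> nrm u" using lw unfolding u_def v_def by simp
      moreover have "nrm u \<le> nrm (u + P v) + nrm (- P v)"
        using norm_tri[OF n, of "u + P v" "- P v"] by simp
      moreover have "nrm (- P v) = nrm (P v)" using n by simp
      ultimately have key: "nrm (v - P v) \<le> nrm (P v)" using d by simp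
      have Bz: "B z = l *\<^sub>R v" unfolding lw(1) v_def by (simp add: linear_scale[OF lB])
      have "nrm (Pbar P (B z)) = l * nrm (v - P v)"
        using lw(2) n Q Bz by (simp add: linear_scale[OF lP] scaleR_diff_right[symmetric])
      also have "\<dots> \<le> l * nrm (P v)" using key lw(2) by (rule mult_left_mono)
      also have "\<dots> = nrm (P (B z))" using lw(2) n Bz by (simp add: linear_scale[OF lP])
      finally show "z \<in> D_set nrm B P (Pbar P)" unfolding D_set_def by simp
    next
      fix z assume "z \<in> D_set nrm B P (Pbar P)"
      then have zD: "nrm (B z - P (B z)) \<le> nrm (P (B z))" unfolding D_set_def using Q by simp
      define x where "x = inv B (- P (B z))"
      have Bx: "B x = - P (B z)" unfolding x_def using assms(3) by (simp add: bij_is_surj surj_f_inv_f)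
      have Px: "P (B x) = B x" using Bx idem by (simp add: linear_neg[OF lP])
      have "nrm (B x + B z) \<le> nrm (B x)"
        using zD Bx n by (simp add: add.commute)
      then have "z \<in> tangent_cone nrm B x" unfolding tangent_cone_def
        by (intro CollectI exI[of _ 1] exI[of _ z]) simp
      then show "z \<in> C_set nrm B P" unfolding C_set_def using Px by auto
    qed
  qed
  show ?thesis
  proof (intro conjI allI impI ballI)
    fix P assume "P \<in> Ps" then show "C_set nrm B P = D_set nrm B P (Pbar P)" by (rule CD)
  next
    fix k :: real assume "0 \<le> k"
    show "mu_k nrm Ps nu B A k = sigma_k nrm Ps nu Pbar B A k"
      unfolding mu_k_def sigma_k_def
    proof (rule INF_cong[OF refl])
      fix P assume "P \<in> {P \<in> Ps. nu P \<le> k}"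
      then have PP: "P \<in> Ps" by simp
      have "(\<Union>x\<in>{x. P (B x) = B x}. tangent_cone nrm B x - {0}) = C_set nrm B P - {0}"
        unfolding C_set_def by blast
      also have "\<dots> = {z. z \<noteq> 0 \<and> nrm (Pbar P (B z)) \<le> nrm (P (B z))}"
        using CD[OF PP] unfolding D_set_def by blast
      finally have eq: "(\<Union>x\<in>{x. P (B x) = B x}. tangent_cone nrm B x - {0}) = {z. z \<noteq> 0 \<and> nrm (Pbar P (B z)) \<le> nrm (P (B z))}" .
      show "(INF x\<in>{x. P (B x) = B x}. INF z\<in>tangent_cone nrm B x - {0}. ereal (norm (A z) / norm z))
          = (INF z\<in>{z. z \<noteq> 0 \<and> nrm (Pbar P (B z)) \<le> nrm (P (B z))}. ereal (norm (A z) / norm z))"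
        unfolding INF_UNION'[symmetric] eq ..
    qed
  qed
qed

end
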